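(* Let $\varphi$ be a string representation of a graph $G$ on a surface $\mathbf S$, let $u,v$ be vertices of $G$, and let $W_1,W_2,W_3$ be three walks from $u$ to $v$. If the closed walk $W_1-W_2$ imitates a non-contractible closed curve, then at least one of the closed walks $W_1-W_3$ and $W_2-W_3$ imitates a non-contractible closed curve.
   Context: A string representation of $G$ on a surface $\mathbf S$ assigns to each vertex a bounded curve in $\mathbf S$ so that distinct vertices are adjacent iff their curves intersect. For walks $W=w_0,\dots,w_k$ and $W'=w'_0,\dots,w'_\ell$ with $w_k=w'_0$, $W+W'=w_0,\dots,w_k,w'_1,\dots,w'_\ell$; $-W$ is the reversal of $W$, and $W-W'=W+(-W')$. A walk $W=w_0,\dots,w_k$ imitates a curve $\pi\subseteq\bigcup_x\varphi(x)$ if $\pi$ can be partitioned into consecutive subcurves $\pi_0,\dots,\pi_k$ of positive length with $\pi=\pi_0+\dots+\pi_k$ and $\pi_i\subseteq\varphi(w_i)$. *)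

theory Defs
  imports "HOL-Analysis.Analysis"
begin

definition surface :: "'a topology \<Rightarrow> bool" where
  "surface S \<longleftrightarrow> Hausdorff_space S \<and>
     (\<forall>x\<in>topspace S. \<exists>U. openin S U \<and> x \<in> U \<and>
        subtopology S U homeomorphic_space (euclidean :: (real^2) topology))"

definition curve :: "'a topology \<Rightarrow> 'a set \<Rightarrow> bool" where
  "curve S C \<longleftrightarrow> (\<exists>g. pathin S g \<and> C = g ` {0..1}) \<and> \<not> (\<exists>c. C = {c})"

definition simple_graph :: "'v set \<Rightarrow> ('v \<Rightarrow> 'v \<Rightarrow> bool) \<Rightarrow> bool" where
  "simple_graph V E \<longleftrightarrow> finite V \<and>
     (\<forall>x y. E x y \<longrightarrow> x \<in> V \<and> y \<in> V \<and> x \<noteq> y \<and> E y x)"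

definition string_rep ::
  "'a topology \<Rightarrow> 'v set \<Rightarrow> ('v \<Rightarrow> 'v \<Rightarrow> bool) \<Rightarrow> ('v \<Rightarrow> 'a set) \<Rightarrow> bool" where
  "string_rep S V E \<phi> \<longleftrightarrow> (\<forall>x\<in>V. curve S (\<phi> x)) \<and>
     (\<forall>x\<in>V. \<forall>y\<in>V. x \<noteq> y \<longrightarrow> (E x y \<longleftrightarrow> \<phi> x \<inter> \<phi> y \<noteq> {}))"

definition walk :: "'v set \<Rightarrow> ('v \<Rightarrow> 'v \<Rightarrow> bool) \<Rightarrow> 'v list \<Rightarrow> bool" where
  "walk V E W \<longleftrightarrow> W \<noteq> [] \<and> set W \<subseteq> V \<and>
     (\<forall>i. Suc i < length W \<longrightarrow> E (W ! i) (W ! Suc i))"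

definition walk_plus :: "'v list \<Rightarrow> 'v list \<Rightarrow> 'v list" where
  "walk_plus W W' = W @ tl W'"

definition walk_minus :: "'v list \<Rightarrow> 'v list \<Rightarrow> 'v list" where
  "walk_minus W W' = walk_plus W (rev W')"

definition imitates :: "'a topology \<Rightarrow> ('v \<Rightarrow> 'a set) \<Rightarrow> 'v list \<Rightarrow> (real \<Rightarrow> 'a) \<Rightarrow> bool" where
  "imitates S \<phi> W g \<longleftrightarrow> pathin S g \<and>
     (\<exists>t::nat \<Rightarrow> real. t 0 = 0 \<and> t (length W) = 1 \<and>
        (\<forall>i<length W. t i < t (Suc i) \<and> g ` {t i..t (Suc i)} \<subseteq> \<phi> (W ! i) \<and>
            \<not> (\<exists>c. g ` {t i..t (Suc i)} = {c})))"

definition contractible_loop :: "'a topology \<Rightarrow> (real \<Rightarrow> 'a) \<Rightarrow> bool" where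
  "contractible_loop S g \<longleftrightarrow>
     homotopic_with (\<lambda>r. r 0 = r 1) (top_of_set {0..1}) S g (\<lambda>_. g 0)"

definition imitates_noncontractible :: "'a topology \<Rightarrow> ('v \<Rightarrow> 'a set) \<Rightarrow> 'v list \<Rightarrow> bool" where
  "imitates_noncontractible S \<phi> W \<longleftrightarrow>
     (\<exists>g. imitates S \<phi> W g \<and> g 0 = g 1 \<and> \<not> contractible_loop S g)"

end

theory Submission
  imports Defs
begin

lemma PiE_ext_eq:
  fixes K :: "'a set"
  shows "PiE K (\<lambda>_. {0..1::real}) = PiE UNIV (\<lambda>i. if i \<in> K then {0..1::real} else {undefined})"
    (is "_ = PiE UNIV ?S'")
proof (rule set_eqI, rule iffI)
  fix x
  assume "x \<in> PiE K (\<lambda>_. {0..1::real})"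
  then have a: "\<And>i. i \<in> K \<Longrightarrow> x i \<in> {0..1}" and b: "\<And>i. i \<notin> K \<Longrightarrow> x i = undefined"
    by (auto simp: PiE_iff extensional_def)
  show "x \<in> PiE UNIV ?S'"
    unfolding PiE_iff using a b by simp
next
  fix x
  assume "x \<in> PiE UNIV ?S'"
  then have "\<And>i. x i \<in> ?S' i" by (simp add: PiE_iff)
  then have a: "\<And>i. i \<in> K \<Longrightarrow> x i \<in> {0..1}" and b: "\<And>i. i \<notin> K \<Longrightarrow> x i = undefined"
    by (metis, metis singletonD)
  show "x \<in> PiE K (\<lambda>_. {0..1::real})"
    unfolding PiE_iff extensional_def using a b by blast
qed

lemma cube_eq:
  "product_topology (\<lambda>_. top_of_set {0..1::real}) K = subtopology euclidean (PiE K (\<lambda>_. {0..1}))"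
proof -
  define S' where "S' = (\<lambda>i. if i \<in> K then {0..1::real} else {undefined})"
  have PE: "PiE K (\<lambda>_. {0..1::real}) = PiE UNIV S'"
    unfolding S'_def by (rule PiE_ext_eq)
  have "subtopology euclidean (PiE K (\<lambda>_. {0..1})) = product_topology (\<lambda>i. subtopology euclidean (S' i)) UNIV"
  proof -
    have X: "subtopology (product_topology (\<lambda>_. euclidean) UNIV) (PiE UNIV S') = product_topology (\<lambda>i. subtopology euclidean (S' i)) UNIV"
      by (rule subtopology_product_topology)
    then have "subtopology euclidean (PiE UNIV S') = product_topology (\<lambda>i. subtopology euclidean (S' i)) UNIV"
      unfolding euclidean_product_topology .
    then show ?thesis unfolding PE .
  qed
  moreover have "product_topology (\<lambda>i. subtopology euclidean (S' i)) UNIV = product_topology (\<lambda>_. top_of_set {0..1::real}) K"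
  proof -
    have 1: "continuous_map (product_topology (\<lambda>i. subtopology euclidean (S' i)) UNIV) (product_topology (\<lambda>_. top_of_set {0..1::real}) K) id"
      unfolding continuous_map_componentwise
    proof (intro conjI ballI)
      show "id ` topspace (product_topology (\<lambda>i. top_of_set (S' i)) UNIV) \<subseteq> extensional K"
      proof
        fix x assume "x \<in> id ` topspace (product_topology (\<lambda>i. top_of_set (S' i)) UNIV)"
        then have "x \<in> PiE UNIV S'" by simp
        then have "x \<in> PiE K (\<lambda>_. {0..1::real})" using PE by simp
        then show "x \<in> extensional K" by (simp add: PiE_iff)
      qed
      fix k assume "k \<in> K"
      then have "S' k = {0..1}" by (simp add: S'_def)
      then show "continuous_map (product_topology (\<lambda>i. top_of_set (S' i)) UNIV) (top_of_set {0..1}) (\<lambda>x. id x k)"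
        using continuous_map_product_projection[of k UNIV "\<lambda>i. top_of_set (S' i)"] by simp
    qed
    have 2: "continuous_map (product_topology (\<lambda>_. top_of_set {0..1::real}) K) (product_topology (\<lambda>i. subtopology euclidean (S' i)) UNIV) id"
      unfolding continuous_map_componentwise
    proof (intro conjI ballI)
      show "id ` topspace (product_topology (\<lambda>_. top_of_set {0..1::real}) K) \<subseteq> extensional UNIV"
        by simp
      fix k
      show "continuous_map (product_topology (\<lambda>_. top_of_set {0..1::real}) K) (top_of_set (S' k)) (\<lambda>x. id x k)"
      proof (cases "k \<in> K")
        case True
        then have "S' k = {0..1}" by (simp add: S'_def)
        then show ?thesis using True continuous_map_product_projection[of k K "\<lambda>_. top_of_set {0..1::real}"] by simp
      next
        case False
        then have Sk: "S' k = {undefined}" by (simp add: S'_def)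
        have "continuous_map (product_topology (\<lambda>_. top_of_set {0..1::real}) K) (top_of_set (S' k)) (\<lambda>x. undefined)"
          unfolding Sk by simp
        then show ?thesis
        proof (rule continuous_map_eq)
          fix x assume "x \<in> topspace (product_topology (\<lambda>_. top_of_set {0..1::real}) K)"
          then show "undefined = id x k" using False by (simp add: PiE_iff extensional_def)
        qed
      qed
    qed
    show ?thesis using 1 2 homeomorphic_maps_def homeomorphic_maps_id by fastforce
  qed
  ultimately show ?thesis by simp
qed

lemma surface_lc:
  assumes "surface S" shows "locally_compact_space S"
  unfolding locally_compact_space_def
proof
  fix x assume x: "x \<in> topspace S"
  then obtain U where U: "openin S U" "x \<in> U" and h: "subtopology S U homeomorphic_space (euclidean :: (real^2) topology)"
    using assms unfolding surface_def by blast
  have "locally_compact_space (subtopology S U)"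
    using h homeomorphic_locally_compact_space locally_compact_space_euclidean by blast
  moreover have "x \<in> topspace (subtopology S U)" using x U by simp
  ultimately obtain V K where V: "openin (subtopology S U) V" "compactin (subtopology S U) K" "x \<in> V" "V \<subseteq> K"
    unfolding locally_compact_space_def by blast
  have "openin S V" using V(1) U(1) openin_trans_full by blast
  moreover have "compactin S K" using V(2) compactin_subtopology by blast
  ultimately show "\<exists>U K. openin S U \<and> compactin S K \<and> x \<in> U \<and> U \<subseteq> K" using V by blast
qed

lemma surface_embedding:
  fixes S :: "'a topology"
  assumes "surface S"
  obtains e :: "'a \<Rightarrow> (('a \<Rightarrow> real) \<Rightarrow> real)" where "embedding_map S euclidean e"
proof -
  have H: "Hausdorff_space S" using assms surface_def by blast
  have "completely_regular_space S"
    using locally_compact_regular_imp_completely_regular_space surface_lc[OF assms] H by blast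
  then obtain K :: "('a\<Rightarrow>real) set" and e where e: "embedding_map S (product_topology (\<lambda>f. top_of_set {0..1::real}) K) e"
    using completely_regular_space_cube_embedding H by blast
  have "product_topology (\<lambda>_. top_of_set {0..1::real}) K = subtopology euclidean (PiE K (\<lambda>_. {0..1}))"
    by (rule cube_eq)
  then have "embedding_map S (subtopology euclidean (PiE K (\<lambda>_. {0..1::real}))) e" using e by simp
  then show ?thesis using that embedding_map_in_subtopology by blast
qed


lemma hp_rid:
  assumes "path p" "path_image p \<subseteq> S"
  shows "homotopic_paths S (p +++ (\<lambda>_. pathfinish p)) p"
proof -
  have \<section>: "continuous_on {0..1} (\<lambda>t::real. if t \<le> 1/2 then 2 *\<^sub>R t else 1)"
    unfolding split_01
    by (rule continuous_on_cases continuous_intros | force simp: pathfinish_def joinpaths_def)+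
  show ?thesis
    apply (rule homotopic_paths_sym)
    using assms unfolding pathfinish_def joinpaths_def
    by (intro \<section> continuous_on_cases continuous_intros homotopic_paths_reparametrize [where f = "\<lambda>t. if t \<le> 1/2 then 2 *\<^sub>R t else 1"]; force)
qed

lemma hp_lid:
  assumes "path p" "path_image p \<subseteq> S"
  shows "homotopic_paths S ((\<lambda>_. pathstart p) +++ p) p"
proof -
  have \<section>: "continuous_on {0..1} (\<lambda>t::real. if t \<le> 1/2 then 0 else 2 * t - 1)"
    unfolding split_01
    by (rule continuous_on_cases continuous_intros | force)+
  show ?thesis
    apply (rule homotopic_paths_sym)
    using assms unfolding pathstart_def joinpaths_def
    by (intro \<section> continuous_on_cases continuous_intros homotopic_paths_reparametrize [where f = "\<lambda>t. if t \<le> 1/2 then 0 else 2 * t - 1"]; force)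
qed

lemma hp_rinv:
  assumes "path p" "path_image p \<subseteq> S"
    shows "homotopic_paths S (p +++ reversepath p) (\<lambda>_. pathstart p)"
proof -
  have p: "continuous_on {0..1} p" 
    using assms by (auto simp: path_def)
  let ?A = "{0..1} \<times> {0..1}"
  have "continuous_on ?A (\<lambda>x. ((\<lambda>t. p (fst x * t)) +++ reversepath ((\<lambda>t. p (fst x * t)))) (snd x))"
    unfolding joinpaths_def reversepath_def path_def
  proof (rule continuous_on_cases_le)
    show "continuous_on {x \<in> ?A. snd x \<le> 1/2} (\<lambda>t. p (fst t * (2 * snd t)))"
         "continuous_on {x \<in> ?A. 1/2 \<le> snd x} (\<lambda>t. p (fst t * (1 - (2 * snd t - 1))))"
         "continuous_on ?A snd"
      by (intro continuous_on_compose2 [OF p] continuous_intros; auto simp: mult_le_one)+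
  qed (auto simp: algebra_simps)
  then show ?thesis
    using assms
    apply (subst homotopic_paths_sym_eq)
    unfolding homotopic_paths_def homotopic_with_def
    apply (rule_tac x="(\<lambda>y. ((\<lambda>t. p (fst y * t)) +++ reversepath((\<lambda>t. p (fst y * t)))) (snd y))" in exI)
    apply (force simp: mult_le_one path_defs joinpaths_def reversepath_def)
    done
qed

lemma hp_star:
  assumes "path q" "path_image q \<subseteq> S" "pathfinish q = a"
  shows "homotopic_paths S (q +++ (\<lambda>_. a) +++ reversepath q) (\<lambda>_. pathstart q)"
proof -
  have "homotopic_paths S ((\<lambda>_. a) +++ reversepath q) (reversepath q)"
    using hp_lid[of "reversepath q" S] assms by simp
  then have "homotopic_paths S (q +++ (\<lambda>_. a) +++ reversepath q) (q +++ reversepath q)"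
    using assms by (intro homotopic_paths_join) (auto simp: pathstart_def pathfinish_def joinpaths_def)
  then show ?thesis using hp_rinv[OF assms(1,2)] homotopic_paths_trans by blast
qed

lemma hl_null:
  assumes "homotopic_loops S p (\<lambda>_. a)"
  shows "homotopic_paths S p (\<lambda>_. pathstart p)"
proof -
  have "path p" by (metis assms homotopic_loops_imp_path)
  have ploop: "pathfinish p = pathstart p" by (metis assms homotopic_loops_imp_loop)
  have pip: "path_image p \<subseteq> S" by (metis assms homotopic_loops_imp_subset)
  let ?A = "{0..1::real} \<times> {0..1::real}"
  obtain h where conth: "continuous_on ?A h"
             and hs: "h \<in> ?A \<rightarrow> S"
             and h0[simp]: "\<And>x. x \<in> {0..1} \<Longrightarrow> h(0,x) = p x"
             and h1[simp]: "\<And>x. x \<in> {0..1} \<Longrightarrow> h(1,x) = a"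
             and ends: "\<And>t. t \<in> {0..1} \<Longrightarrow> pathfinish (h \<circ> Pair t) = pathstart (h \<circ> Pair t)"
    using assms by (auto simp: homotopic_loops)
  have conth0: "path (\<lambda>u. h (u, 0))"
    unfolding path_def
  proof (rule continuous_on_compose [of _ _ h, unfolded o_def])
    show "continuous_on ((\<lambda>x. (x, 0)) ` {0..1}) h"
      by (force intro: continuous_on_subset [OF conth])
  qed (force intro: continuous_intros)
  have pih0: "path_image (\<lambda>u. h (u, 0)) \<subseteq> S"
    using hs by (force simp: path_image_def)
  have c1: "continuous_on ?A (\<lambda>x. h (fst x * snd x, 0))"
  proof (rule continuous_on_compose [of _ _ h, unfolded o_def])
    show "continuous_on ((\<lambda>x. (fst x * snd x, 0)) ` ?A) h"
      by (force simp: mult_le_one intro: continuous_on_subset [OF conth])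
  qed (force intro: continuous_intros)+
  have c2: "continuous_on ?A (\<lambda>x. h (fst x - fst x * snd x, 0))"
  proof (rule continuous_on_compose [of _ _ h, unfolded o_def])
    show "continuous_on ((\<lambda>x. (fst x - fst x * snd x, 0)) ` ?A) h"
      by (auto simp: algebra_simps add_increasing2 mult_left_le intro: continuous_on_subset [OF conth])
  qed (force intro: continuous_intros)
  have c3: "continuous_on ?A (\<lambda>x. h (fst x, snd x))"
    using conth by simp
  have hloop[simp]: "\<And>t. \<lbrakk>0 \<le> t \<and> t \<le> 1\<rbrakk> \<Longrightarrow> h (t, 1) = h (t, 0)"
    using ends by (simp add: pathfinish_def pathstart_def)
  have 1: "homotopic_paths S p (p +++ (\<lambda>_. pathfinish p))"
    using \<open>path p\<close> hp_rid homotopic_paths_sym pip by blast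
  moreover have "homotopic_paths S (p +++ (\<lambda>_. pathfinish p))
                                   ((\<lambda>_. pathstart p) +++ p +++ (\<lambda>_. pathfinish p))"
    using hp_lid [of "p +++ (\<lambda>_. pathfinish p)" S]
    by (metis 1 homotopic_paths_imp_path homotopic_paths_imp_subset homotopic_paths_sym pathstart_join)
  moreover 
  have "homotopic_paths S ((\<lambda>_. pathstart p) +++ p +++ (\<lambda>_. pathfinish p))
                                   ((\<lambda>u. h (u, 0)) +++ (\<lambda>_. a) +++ reversepath (\<lambda>u. h (u, 0)))"
    unfolding homotopic_paths
  proof (intro exI conjI ballI)
    let ?h = "\<lambda>y. ((\<lambda>u. h (fst y * u, 0)) +++ (\<lambda>u. h (Pair (fst y) u)) 
               +++ (\<lambda>u. h (fst y - fst y * u, 0))) (snd y)" 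
    show "continuous_on ?A ?h"
      by (intro continuous_on_homotopic_join_lemma; simp add: path_defs joinpaths_def c1 c2 c3 conth)
    show "?h \<in> ?A \<rightarrow> S"
    proof
      fix y assume "y \<in> ?A"
      then obtain s x where y: "y=(s,x)" "0\<le>s" "s\<le>1" "0\<le>x" "x\<le>1" by auto
      have m: "h(s*w,0) \<in> S \<and> h(s,w) \<in> S \<and> h(s - s*w, 0) \<in> S" if "0\<le>w" "w\<le>1" for w
      proof -
        have a: "0 \<le> s*w" using y that by simp
        have b: "s*w \<le> s" using y that mult_left_mono[of w 1 s] by simp
        have "s*w \<in> {0..1}" using a b y by simp
        moreover have "s - s*w \<in> {0..1}" using a b y by simp
        ultimately show ?thesis using hs y that by auto
      qed
      show "?h y \<in> S"
      proof (cases "x \<le> 1/2")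
        case True then show ?thesis using m[of "2*x"] y by (simp add: joinpaths_def)
      next
        case F: False
        show ?thesis
        proof (cases "2*x - 1 \<le> 1/2")
          case True then show ?thesis using m[of "2*(2*x-1)"] y F by (simp add: joinpaths_def)
        next
          case False then show ?thesis using m[of "2*(2*x-1)-1"] y F by (simp add: joinpaths_def)
        qed
      qed
    qed
    fix x :: real assume x: "x \<in> {0..1}"
    show "?h (0, x) = ((\<lambda>_. pathstart p) +++ p +++ (\<lambda>_. pathfinish p)) x"
      using x ploop by (auto simp: joinpaths_def pathstart_def pathfinish_def)
    show "?h (1, x) = ((\<lambda>u. h (u, 0)) +++ (\<lambda>_. a) +++ reversepath (\<lambda>u. h (u, 0))) x"
      using x by (auto simp: joinpaths_def reversepath_def)
  next
    fix t :: real assume t: "t \<in> {0..1}"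
    show "pathstart ((\<lambda>y. ((\<lambda>u. h (fst y * u, 0)) +++ (\<lambda>u. h (Pair (fst y) u)) 
               +++ (\<lambda>u. h (fst y - fst y * u, 0))) (snd y)) \<circ> Pair t) =
          pathstart ((\<lambda>_. pathstart p) +++ p +++ (\<lambda>_. pathfinish p))"
      by (simp add: joinpaths_def pathstart_def)
    show "pathfinish ((\<lambda>y. ((\<lambda>u. h (fst y * u, 0)) +++ (\<lambda>u. h (Pair (fst y) u)) 
               +++ (\<lambda>u. h (fst y - fst y * u, 0))) (snd y)) \<circ> Pair t) =
          pathfinish ((\<lambda>_. pathstart p) +++ p +++ (\<lambda>_. pathfinish p))"
      using ploop by (simp add: joinpaths_def pathstart_def pathfinish_def)
  qed
  moreover have "homotopic_paths S ((\<lambda>u. h (u, 0)) +++ (\<lambda>_. a) +++ reversepath (\<lambda>u. h (u, 0)))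
                                   (\<lambda>_. pathstart p)"
  proof -
    have "homotopic_paths S ((\<lambda>u. h (u, 0)) +++ (\<lambda>_. a) +++ reversepath (\<lambda>u. h (u, 0)))
                                   (\<lambda>_. pathstart (\<lambda>u. h (u, 0)))"
      by (rule hp_star[OF conth0 pih0]) (simp add: pathfinish_def)
    moreover have "pathstart (\<lambda>u. h (u, 0)) = pathstart p" by (simp add: pathstart_def)
    ultimately show ?thesis by simp
  qed
  ultimately show ?thesis
    by (blast intro: homotopic_paths_trans)
qed

lemma hp_cancel:
  assumes pa: "path \<alpha>" "path_image \<alpha> \<subseteq> T" and pd: "path \<delta>" "path_image \<delta> \<subseteq> T"
    and e: "pathfinish \<alpha> = pathstart \<delta>" "pathfinish \<delta> = pathstart \<alpha>"
    and N: "homotopic_paths T (\<alpha> +++ \<delta>) (\<lambda>_. pathstart \<alpha>)"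
  shows "homotopic_paths T \<alpha> (reversepath \<delta>)"
proof -
  have 1: "homotopic_paths T \<alpha> (\<alpha> +++ (\<lambda>_. pathfinish \<alpha>))"
    using hp_rid[OF pa] homotopic_paths_sym by blast
  have "homotopic_paths T (\<lambda>_. pathfinish \<alpha>) (\<delta> +++ reversepath \<delta>)"
    using hp_rinv[OF pd] e homotopic_paths_sym by auto
  then have 2: "homotopic_paths T (\<alpha> +++ (\<lambda>_. pathfinish \<alpha>)) (\<alpha> +++ (\<delta> +++ reversepath \<delta>))"
    using pa by (intro homotopic_paths_join) (auto simp: pathstart_def)
  have 3: "homotopic_paths T (\<alpha> +++ (\<delta> +++ reversepath \<delta>)) ((\<alpha> +++ \<delta>) +++ reversepath \<delta>)"
    using pa pd e by (intro homotopic_paths_assoc) auto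
  have 4: "homotopic_paths T ((\<alpha> +++ \<delta>) +++ reversepath \<delta>) ((\<lambda>_. pathstart \<alpha>) +++ reversepath \<delta>)"
    using N pd e by (intro homotopic_paths_join) auto
  have 5: "homotopic_paths T ((\<lambda>_. pathstart \<alpha>) +++ reversepath \<delta>) (reversepath \<delta>)"
    using hp_lid[of "reversepath \<delta>" T] pd e by simp
  show ?thesis using 1 2 3 4 5 homotopic_paths_trans by metis
qed

lemma hl_core:
  fixes T :: "'b::topological_space set"
  assumes pa: "path \<alpha>" "path_image \<alpha> \<subseteq> T" and pg: "path \<gamma>" "path_image \<gamma> \<subseteq> T"
    and pd: "path \<delta>" "path_image \<delta> \<subseteq> T"
    and e: "pathstart \<alpha> = a" "pathstart \<gamma> = a" "pathfinish \<alpha> = pathstart \<delta>" "pathfinish \<gamma> = pathstart \<delta>"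
      "pathfinish \<delta> = a"
    and L1: "homotopic_loops T (\<alpha> +++ \<delta>) (\<lambda>_. a)"
    and L2: "homotopic_loops T (\<gamma> +++ \<delta>) (\<lambda>_. a)"
  shows "homotopic_loops T (\<alpha> +++ reversepath \<gamma>) (\<lambda>_. a)"
proof -
  have N1: "homotopic_paths T (\<alpha> +++ \<delta>) (\<lambda>_. pathstart \<alpha>)"
    using hl_null[OF L1] e by simp
  have N2: "homotopic_paths T (\<gamma> +++ \<delta>) (\<lambda>_. pathstart \<gamma>)"
    using hl_null[OF L2] e by simp
  have A: "homotopic_paths T \<alpha> (reversepath \<delta>)"
    using hp_cancel[OF pa pd _ _ N1] e by simp
  have G: "homotopic_paths T \<gamma> (reversepath \<delta>)"
    using hp_cancel[OF pg pd _ _ N2] e by simp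
  have AG: "homotopic_paths T \<alpha> \<gamma>"
    using A G homotopic_paths_sym homotopic_paths_trans by blast
  have "homotopic_paths T (\<alpha> +++ reversepath \<gamma>) (\<gamma> +++ reversepath \<gamma>)"
    using AG pg e by (intro homotopic_paths_join) auto
  moreover have "homotopic_paths T (\<gamma> +++ reversepath \<gamma>) (\<lambda>_. a)"
    using hp_rinv[OF pg] e by simp
  ultimately have "homotopic_paths T (\<alpha> +++ reversepath \<gamma>) (\<lambda>_. a)"
    using homotopic_paths_trans by blast
  then show ?thesis
    by (rule homotopic_paths_imp_homotopic_loops) (use e in \<open>auto simp: pathstart_def pathfinish_def joinpaths_def reversepath_def\<close>)
qed


definition jp :: "(real \<Rightarrow> 'a) \<Rightarrow> (real \<Rightarrow> 'a) \<Rightarrow> real \<Rightarrow> 'a" where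
  "jp p q = (\<lambda>x. if x \<le> 1/2 then p (2*x) else q (2*x - 1))"
definition rv :: "(real \<Rightarrow> 'a) \<Rightarrow> real \<Rightarrow> 'a" where
  "rv p = (\<lambda>x. p (1 - x))"

lemma comp_jp: "e \<circ> jp p q = (e \<circ> p) +++ (e \<circ> q)"
  by (auto simp: jp_def joinpaths_def)
lemma comp_rv: "e \<circ> rv p = reversepath (e \<circ> p)"
  by (auto simp: rv_def reversepath_def)

lemma abstract_core:
  fixes S :: "'a topology" and e :: "'a \<Rightarrow> 'b::topological_space"
  assumes emb: "embedding_map S euclidean e"
    and pa: "pathin S \<alpha>" and pg: "pathin S \<gamma>" and pd: "pathin S \<delta>" and pgg: "pathin S g"
    and ends: "\<alpha> 0 = g 0" "\<gamma> 0 = g 0" "\<alpha> 1 = \<delta> 0" "\<gamma> 1 = \<delta> 0" "\<delta> 1 = g 0" "g 1 = g 0"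
    and C1: "contractible_loop S (jp \<alpha> \<delta>)" and C2: "contractible_loop S (jp \<gamma> \<delta>)"
    and f: "continuous_on {0..1} f" "f \<in> {0..1} \<rightarrow> {0..1}" "f 0 = 0" "f 1 = 1"
    and gf: "\<And>x. x \<in> {0..1} \<Longrightarrow> jp \<alpha> (rv \<gamma>) x = g (f x)"
  shows "contractible_loop S g"
proof -
  define T where "T = e ` topspace S"
  have hm: "homeomorphic_map S (top_of_set T) e"
    using emb unfolding embedding_map_def T_def by simp
  then obtain e' where hms: "homeomorphic_maps S (top_of_set T) e e'"
    using homeomorphic_map_maps by blast
  then have ce: "continuous_map S (top_of_set T) e" and ce': "continuous_map (top_of_set T) S e'"
    and ee: "\<And>x. x \<in> topspace S \<Longrightarrow> e' (e x) = x"
    by (auto simp: homeomorphic_maps_def)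
  have P: "path (e \<circ> p) \<and> path_image (e \<circ> p) \<subseteq> T" if "pathin S p" for p
  proof -
    have "pathin (top_of_set T) (e \<circ> p)" using pathin_compose[OF that ce] .
    then show ?thesis by (auto simp: pathin_canon_iff path_image_def)
  qed
  have CL: "homotopic_loops T (e \<circ> L) (\<lambda>_. e (L 0))" if "contractible_loop S L" for L
  proof -
    have "homotopic_with (\<lambda>r. pathfinish r = pathstart r) (top_of_set {0..1}) (top_of_set T) (e \<circ> L) (e \<circ> (\<lambda>_. L 0))"
      using that unfolding contractible_loop_def
      by (rule homotopic_with_compose_continuous_map_left[OF _ ce]) (simp add: pathfinish_def pathstart_def)
    then show ?thesis by (simp add: homotopic_loops_def o_def)
  qed
  have L1: "homotopic_loops T ((e \<circ> \<alpha>) +++ (e \<circ> \<delta>)) (\<lambda>_. e (g 0))"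
    using CL[OF C1] ends unfolding comp_jp by (simp add: jp_def)
  have L2: "homotopic_loops T ((e \<circ> \<gamma>) +++ (e \<circ> \<delta>)) (\<lambda>_. e (g 0))"
    using CL[OF C2] ends unfolding comp_jp by (simp add: jp_def)
  have core: "homotopic_loops T ((e \<circ> \<alpha>) +++ reversepath (e \<circ> \<gamma>)) (\<lambda>_. e (g 0))"
    by (rule hl_core[OF _ _ _ _ _ _ _ _ _ _ _ L1 L2])
       (use P[OF pa] P[OF pg] P[OF pd] ends in \<open>auto simp: pathstart_def pathfinish_def\<close>)
  have rep: "homotopic_paths T (e \<circ> g) ((e \<circ> \<alpha>) +++ reversepath (e \<circ> \<gamma>))"
  proof (rule homotopic_paths_reparametrize[OF _ _ f])
    show "path (e \<circ> g)" "path_image (e \<circ> g) \<subseteq> T" using P[OF pgg] by auto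
    fix t :: real assume "t \<in> {0..1}"
    then show "((e \<circ> \<alpha>) +++ reversepath (e \<circ> \<gamma>)) t = (e \<circ> g) (f t)"
      using gf[of t] by (simp flip: comp_jp comp_rv)
  qed
  have "homotopic_loops T (e \<circ> g) (\<lambda>_. e (g 0))"
  proof (rule homotopic_loops_trans[OF _ core])
    show "homotopic_loops T (e \<circ> g) ((e \<circ> \<alpha>) +++ reversepath (e \<circ> \<gamma>))"
      by (rule homotopic_paths_imp_homotopic_loops[OF rep])
         (use ends in \<open>auto simp: pathstart_def pathfinish_def joinpaths_def reversepath_def\<close>)
  qed
  then have "homotopic_with (\<lambda>r. r 0 = r 1) (top_of_set {0..1}) S (e' \<circ> (e \<circ> g)) (e' \<circ> (\<lambda>_. e (g 0)))"
    unfolding homotopic_loops_def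
    by (rule homotopic_with_compose_continuous_map_left[OF _ ce']) (simp add: pathfinish_def pathstart_def)
  then have "homotopic_with (\<lambda>r. r 0 = r 1) (top_of_set {0..1}) S g (\<lambda>_. g 0)"
  proof (rule homotopic_with_eq)
    fix x assume "x \<in> topspace (top_of_set {0..1::real})"
    then have "g x \<in> topspace S" using pgg by (auto simp: pathin_def continuous_map_def)
    then show "g x = (e' \<circ> (e \<circ> g)) x" by (simp add: ee)
  next
    fix x assume "x \<in> topspace (top_of_set {0..1::real})"
    have "g 0 \<in> topspace S" using pgg by (auto simp: pathin_def continuous_map_def)
    then show "g 0 = (e' \<circ> (\<lambda>_. e (g 0))) x" by (simp add: ee)
  next
    fix h k :: "real \<Rightarrow> 'a" assume "\<And>x. x \<in> topspace (top_of_set {0..1::real}) \<Longrightarrow> h x = k x"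
    then show "(h 0 = h 1) \<longleftrightarrow> (k 0 = k 1)" by simp
  qed
  then show ?thesis unfolding contractible_loop_def .
qed


lemma pathin_comp_real:
  assumes "pathin S p" "continuous_on A f" "f ` A \<subseteq> {0..1}"
  shows "continuous_map (top_of_set A) S (\<lambda>x. p (f x))"
proof -
  have "continuous_map (top_of_set A) (top_of_set {0..1}) f"
    using assms by (simp add: continuous_map_in_subtopology continuous_map_iff_continuous image_subset_iff_funcset)
  then have "continuous_map (top_of_set A) S (p \<circ> f)"
    using assms(1) unfolding pathin_def by (rule continuous_map_compose)
  then show ?thesis by (simp add: o_def)
qed

lemma pathin_jp:
  assumes "pathin S p" "pathin S q" "p 1 = q 0"
  shows "pathin S (jp p q)"
  unfolding pathin_def jp_def
proof (rule continuous_map_cases_le)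
  show "continuous_map (top_of_set {0..1}) euclideanreal (\<lambda>x. x)" by (simp add: continuous_map_iff_continuous)
  show "continuous_map (top_of_set {0..1}) euclideanreal (\<lambda>x. 1/2)" by simp
  have e1: "subtopology (top_of_set {0..1}) {x \<in> topspace (top_of_set {0..1}). x \<le> 1 / 2} = top_of_set {0..1/2::real}"
  proof -
    have "{0..1} \<inter> {x \<in> topspace (top_of_set {0..1}). x \<le> 1 / 2} = {0..1/2::real}" by auto
    then show ?thesis by (simp add: subtopology_subtopology)
  qed
  show "continuous_map (subtopology (top_of_set {0..1}) {x \<in> topspace (top_of_set {0..1}). x \<le> 1 / 2}) S (\<lambda>x. p (2 * x))"
    unfolding e1 by (rule pathin_comp_real[OF assms(1)]) (auto intro!: continuous_intros)
  have e2: "subtopology (top_of_set {0..1}) {x \<in> topspace (top_of_set {0..1}). 1/2 \<le> x} = top_of_set {1/2..1::real}"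
  proof -
    have "{0..1} \<inter> {x \<in> topspace (top_of_set {0..1}). 1/2 \<le> x} = {1/2..1::real}" by auto
    then show ?thesis by (simp add: subtopology_subtopology)
  qed
  show "continuous_map (subtopology (top_of_set {0..1}) {x \<in> topspace (top_of_set {0..1}). 1/2 \<le> x}) S (\<lambda>x. q (2 * x - 1))"
    unfolding e2 by (rule pathin_comp_real[OF assms(2)]) (auto intro!: continuous_intros)
  show "\<And>x. x \<in> topspace (top_of_set {0..1}) \<Longrightarrow> x = 1 / 2 \<Longrightarrow> p (2 * x) = q (2 * x - 1)"
  proof -
    fix x :: real assume "x = 1/2"
    then have "2*x = 1" "2*x - 1 = 0" by simp_all
    then show "p (2 * x) = q (2 * x - 1)" using assms(3) by simp
  qed
qed

lemma pathin_reparam: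
  assumes "pathin S p" "continuous_on {0..1} f" "f ` {0..1} \<subseteq> {0..1}"
  shows "pathin S (\<lambda>x. p (f x))"
  unfolding pathin_def by (rule pathin_comp_real[OF assms])

lemma conv01:
  fixes x z t :: real
  assumes "0 \<le> x" "x \<le> 1" "0 \<le> z" "z \<le> 1" "0 \<le> t" "t \<le> 1"
  shows "x + (z - x) * t \<in> {0..1}"
proof -
  have e: "x + (z-x)*t = (1-t)*x + t*z" by (simp add: algebra_simps)
  have "0 \<le> (1-t)*x" "0 \<le> t*z" using assms by simp_all
  moreover have "(1-t)*x \<le> 1-t" using assms mult_left_mono[of x 1 "1-t"] by simp
  moreover have "t*z \<le> t" using assms mult_left_mono[of z 1 t] by simp
  ultimately show ?thesis unfolding e by simp
qed

lemma pathin_sub: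
  assumes "pathin S h" "x \<in> {0..1}" "z \<in> {0..1}"
  shows "pathin S (\<lambda>t. h (x + (z - x) * t))"
  by (rule pathin_reparam[OF assms(1)]) (use assms conv01 in \<open>auto intro!: continuous_intros\<close>)

lemma pathin_rv:
  assumes "pathin S p" shows "pathin S (rv p)"
  unfolding rv_def by (rule pathin_reparam[OF assms]) (auto intro!: continuous_intros)

lemma pathin_const: "c \<in> topspace S \<Longrightarrow> pathin S (\<lambda>_. c)"
  by simp

lemma pathin_topspace: "pathin S p \<Longrightarrow> x \<in> {0..1} \<Longrightarrow> p x \<in> topspace S"
  by (auto simp: pathin_def continuous_map_def)

lemma curve_path:
  assumes "curve S C" "a \<in> C" "b \<in> C"
  obtains q where "pathin S q" "q 0 = a" "q 1 = b" "q ` {0..1} \<subseteq> C" "\<not> (\<exists>c. q ` {0..1} = {c})"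
proof -
  obtain h where h: "pathin S h" "C = h ` {0..1}" and ns: "\<not> (\<exists>c. C = {c})"
    using assms(1) unfolding curve_def by blast
  obtain x y where xy: "x \<in> {0..1}" "y \<in> {0..1}" "a = h x" "b = h y"
    using assms h by blast
  obtain z where z: "z \<in> {0..1}" "h z \<noteq> a"
  proof -
    have "C \<noteq> {a}" using ns by blast
    then obtain w where "w \<in> C" "w \<noteq> a" using assms(2) by blast
    then show ?thesis using that h by blast
  qed
  define q where "q = jp (\<lambda>t. h (x + (z - x) * t)) (\<lambda>t. h (z + (y - z) * t))"
  have P1: "pathin S q" unfolding q_def
    by (rule pathin_jp) (use pathin_sub h xy z in auto)
  have P2: "q 0 = a" "q 1 = b" "q (1/2) = h z"
    using xy by (auto simp: q_def jp_def)
  have P3: "q ` {0..1} \<subseteq> C"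
  proof
    fix w assume "w \<in> q ` {0..1}"
    then obtain t where t: "t \<in> {0..1}" "w = q t" by blast
    show "w \<in> C"
    proof (cases "t \<le> 1/2")
      case True
      then have "x + (z - x) * (2*t) \<in> {0..1}" using conv01 xy z t by auto
      then show ?thesis using t True h by (auto simp: q_def jp_def)
    next
      case False
      then have "z + (y - z) * (2*t - 1) \<in> {0..1}" using conv01 xy z t by auto
      then show ?thesis using t False h by (auto simp: q_def jp_def)
    qed
  qed
  have P4: "\<not> (\<exists>c. q ` {0..1} = {c})"
  proof
    assume "\<exists>c. q ` {0..1} = {c}"
    then obtain c where c: "q ` {0..1} = {c}" by blast
    have "q 0 \<in> q ` {0..1}" "q (1/2) \<in> q ` {0..1}" by auto
    then have "q 0 = c" "q (1/2) = c" unfolding c by simp_all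
    then have "q 0 = q (1/2)" by simp
    then show False using z \<open>q 0 = a\<close> \<open>q (1/2) = h z\<close> by simp
  qed
  show ?thesis by (rule that[OF P1 P2(1) P2(2) P3 P4])
qed


definition cutsOK :: "bool \<Rightarrow> ('v \<Rightarrow> 'a set) \<Rightarrow> 'v list \<Rightarrow> (real \<Rightarrow> 'a) \<Rightarrow> (nat \<Rightarrow> real) \<Rightarrow> bool" where
 "cutsOK w \<phi> W p t \<longleftrightarrow> t 0 = 0 \<and> t (length W) = 1 \<and>
    (\<forall>i<length W. t i < t (Suc i) \<and> p ` {t i..t (Suc i)} \<subseteq> \<phi> (W!i) \<and>
       ((w \<longrightarrow> Suc i < length W) \<longrightarrow> \<not>(\<exists>c. p ` {t i..t (Suc i)} = {c})))"

lemma imitates_cuts: "imitates S \<phi> W p \<longleftrightarrow> pathin S p \<and> (\<exists>t. cutsOK False \<phi> W p t)"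
  unfolding imitates_def cutsOK_def by simp

lemma cuts_mono_aux:
  assumes "\<And>i. i < n \<Longrightarrow> (t::nat\<Rightarrow>real) i < t (Suc i)"
  shows "i < j \<Longrightarrow> j \<le> n \<Longrightarrow> t i < t j"
proof (induction j)
  case 0 then show ?case by simp
next
  case (Suc j)
  show ?case
  proof (cases "i = j")
    case True then show ?thesis using assms Suc by simp
  next
    case False
    then have "t i < t j" using Suc by simp
    also have "t j < t (Suc j)" using assms Suc by simp
    finally show ?thesis .
  qed
qed

lemma cuts_mono:
  assumes "cutsOK w \<phi> W p t" "i < j" "j \<le> length W"
  shows "t i < t j"
proof -
  have "\<And>i. i < length W \<Longrightarrow> t i < t (Suc i)" using assms(1) unfolding cutsOK_def by blast
  then show ?thesis using cuts_mono_aux assms(2,3) by blast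
qed

lemma cuts_range:
  assumes "cutsOK w \<phi> W p t" "i \<le> length W"
  shows "0 \<le> t i" "t i \<le> 1"
proof -
  have t0: "t 0 = 0" and tn: "t (length W) = 1" using assms unfolding cutsOK_def by auto
  show "0 \<le> t i"
    using cuts_mono[OF assms(1), of 0 i] assms t0 by (cases "i = 0") auto
  show "t i \<le> 1"
    using cuts_mono[OF assms(1), of i "length W"] assms tn by (cases "i = length W") auto
qed

lemma aff_img:
  fixes a b m c :: real
  assumes "a \<le> b" "0 < m"
  shows "(\<lambda>x. f (m*x + c)) ` {a..b} = f ` {m*a+c..m*b+c}"
proof -
  have "(\<lambda>x. f (m*x + c)) ` {a..b} = f ` ((\<lambda>x. m*x + c) ` {a..b})" by (simp add: image_image)
  also have "(\<lambda>x. m*x + c) ` {a..b} = {m*a+c..m*b+c}"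
    using assms by (simp add: image_affinity_atLeastAtMost)
  finally show ?thesis .
qed

lemma aff_img_neg:
  fixes a b m c :: real
  assumes "a \<le> b" "m < 0"
  shows "(\<lambda>x. f (m*x + c)) ` {a..b} = f ` {m*b+c..m*a+c}"
proof -
  have "(\<lambda>x. f (m*x + c)) ` {a..b} = f ` ((\<lambda>x. m*x + c) ` {a..b})" by (simp add: image_image)
  also have "(\<lambda>x. m*x + c) ` {a..b} = {m*b+c..m*a+c}"
    using assms by (simp add: image_affinity_atLeastAtMost)
  finally show ?thesis .
qed

lemma jp_img1:
  assumes "a \<le> b" "b \<le> 1/2"
  shows "jp p q ` {a..b} = p ` {2*a..2*b}"
proof -
  have "jp p q ` {a..b} = (\<lambda>x. p (2*x + 0)) ` {a..b}"
    using assms by (intro image_cong) (simp_all add: jp_def)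
  also have "\<dots> = p ` {2*a..2*b}" using aff_img[OF assms(1), of 2 p 0] by simp
  finally show ?thesis .
qed

lemma jp_img2:
  assumes "a \<le> b" "1/2 < a"
  shows "jp p q ` {a..b} = q ` {2*a-1..2*b-1}"
proof -
  have "jp p q ` {a..b} = (\<lambda>x. q (2*x + (-1))) ` {a..b}"
    using assms by (intro image_cong) (simp_all add: jp_def)
  also have "\<dots> = q ` {2*a-1..2*b-1}" using aff_img[OF assms(1), of 2 q "-1"] by simp
  finally show ?thesis .
qed

lemma jp_img_mid:
  assumes "a \<le> 1/2" "1/2 \<le> b" "p 1 = q 0"
  shows "jp p q ` {a..b} = p ` {2*a..1} \<union> q ` {0..2*b-1}"
proof -
  have "{a..b} = {a..1/2} \<union> {1/2..b}" using assms by auto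
  then have "jp p q ` {a..b} = jp p q ` {a..1/2} \<union> jp p q ` {1/2..b}" by (simp add: image_Un)
  also have "jp p q ` {a..1/2} = p ` {2*a..1}" using jp_img1[of a "1/2" p q] assms by simp
  also have "jp p q ` {1/2..b} = q ` {0..2*b-1}"
  proof -
    have "jp p q ` {1/2..b} = (\<lambda>x. q (2*x + (-1))) ` {1/2..b}"
    proof (rule image_cong)
      fix x :: real assume x: "x \<in> {1/2..b}"
      show "jp p q x = q (2*x + (-1))"
      proof (cases "x = 1/2")
        case True then show ?thesis unfolding True using assms(3) by (simp add: jp_def)
      next
        case False then show ?thesis using x by (simp add: jp_def)
      qed
    qed simp
    also have "\<dots> = q ` {0..2*b-1}" using aff_img[of "1/2" b 2 q "-1"] assms by simp
    finally show ?thesis .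
  qed
  finally show ?thesis .
qed


lemma nonconst_sub:
  assumes "X \<subseteq> Y" "\<not> (\<exists>c. X = {c})" "X \<noteq> {}"
  shows "\<not> (\<exists>c. Y = {c})"
proof
  assume "\<exists>c. Y = {c}"
  then obtain c where "Y = {c}" by blast
  then have "X = {c}" using assms(1,3) by blast
  then show False using assms(2) by blast
qed

lemma cuts_join:
  assumes cA: "cutsOK True \<phi> A p t" and cB: "cutsOK False \<phi> B q r"
    and ne: "A \<noteq> []" "B \<noteq> []" and lh: "last A = hd B" and pq: "p 1 = q 0"
  shows "cutsOK False \<phi> (A @ tl B) (jp p q)
           (\<lambda>i. if i < length A then t i / 2 else 1/2 + r (i - length A + 1) / 2)"
    (is "cutsOK _ _ _ _ ?T")
proof -
  define nA where "nA = length A"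
  define nB where "nB = length B"
  have nA: "0 < nA" and nB: "0 < nB" using ne by (auto simp: nA_def nB_def)
  have len: "length (A @ tl B) = nA + nB - 1" using nB unfolding nA_def nB_def by (cases B) simp_all
  have t0: "t 0 = 0" and t1: "t nA = 1"
    and segA: "\<And>i. i < nA \<Longrightarrow> t i < t (Suc i) \<and> p ` {t i..t (Suc i)} \<subseteq> \<phi> (A!i) \<and>
       (Suc i < nA \<longrightarrow> \<not>(\<exists>c. p ` {t i..t (Suc i)} = {c}))"
    using cA unfolding cutsOK_def nA_def by auto
  have r0: "r 0 = 0" and r1: "r nB = 1"
    and segB: "\<And>j. j < nB \<Longrightarrow> r j < r (Suc j) \<and> q ` {r j..r (Suc j)} \<subseteq> \<phi> (B!j) \<and>
       \<not>(\<exists>c. q ` {r j..r (Suc j)} = {c})"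
    using cB unfolding cutsOK_def nB_def by auto
  have tr: "\<And>i. i \<le> nA \<Longrightarrow> 0 \<le> t i \<and> t i \<le> 1" using cuts_range[OF cA] nA_def by auto
  have rr: "\<And>j. j \<le> nB \<Longrightarrow> 0 \<le> r j \<and> r j \<le> 1" using cuts_range[OF cB] nB_def by auto
  have rpos: "\<And>j. 0 < j \<Longrightarrow> j \<le> nB \<Longrightarrow> 0 < r j" using cuts_mono[OF cB, of 0] r0 nB_def by auto
  have T0: "?T 0 = 0" using nA t0 by (simp add: nA_def)
  have T1: "?T (length (A @ tl B)) = 1"
  proof -
    have "\<not> (nA + nB - 1 < nA)" "nA + nB - 1 - nA + 1 = nB" using nB by auto
    then show ?thesis using r1 by (simp add: len nA_def[symmetric] nB_def[symmetric])
  qed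
  have seg: "?T i < ?T (Suc i) \<and> jp p q ` {?T i..?T (Suc i)} \<subseteq> \<phi> ((A @ tl B)!i) \<and>
       \<not>(\<exists>c. jp p q ` {?T i..?T (Suc i)} = {c})" if i: "i < nA + nB - 1" for i
  proof (cases "Suc i < nA")
    case True
    then have Ti: "?T i = t i / 2" "?T (Suc i) = t (Suc i) / 2" by (simp_all add: nA_def)
    have s: "t i < t (Suc i)" "p ` {t i..t (Suc i)} \<subseteq> \<phi> (A!i)" "\<not>(\<exists>c. p ` {t i..t (Suc i)} = {c})"
      using segA[of i] True by auto
    have b: "t (Suc i) \<le> 1" using tr[of "Suc i"] True by simp
    have img: "jp p q ` {t i / 2..t (Suc i) / 2} = p ` {t i..t (Suc i)}"
      using jp_img1[of "t i / 2" "t (Suc i) / 2" p q] s b by simp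
    have idx: "(A @ tl B)!i = A!i" using True by (simp add: nth_append nA_def)
    show ?thesis unfolding Ti img idx using s by simp
  next
    case False
    show ?thesis
    proof (cases "i < nA")
      case True
      then have ii: "i = nA - 1" using False by simp
      then have Ti: "?T i = t (nA - 1) / 2" "?T (Suc i) = 1/2 + r 1 / 2" using nA by (simp_all add: nA_def)
      have s: "t (nA-1) < 1" "p ` {t (nA-1)..1} \<subseteq> \<phi> (A!(nA-1))"
        using segA[of "nA-1"] nA t1 by auto
      have sB: "0 < r 1" "q ` {0..r 1} \<subseteq> \<phi> (B!0)" "\<not>(\<exists>c. q ` {0..r 1} = {c})"
        using segB[of 0] nB r0 by auto
      have img: "jp p q ` {t (nA - 1) / 2..1/2 + r 1 / 2} = p ` {t (nA-1)..1} \<union> q ` {0..r 1}"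
        using jp_img_mid[of "t (nA - 1) / 2" "1/2 + r 1 / 2" p q] s sB pq by simp
      have idx: "(A @ tl B)!i = B!0"
      proof -
        have "(A @ tl B)!i = A!(nA-1)" using ii nA by (simp add: nth_append nA_def)
        also have "\<dots> = last A" using ne by (simp add: last_conv_nth nA_def)
        also have "\<dots> = B!0" using lh ne by (simp add: hd_conv_nth)
        finally show ?thesis .
      qed
      have A0: "A!(nA-1) = B!0" using idx ii nA by (simp add: nth_append nA_def)
      have ne2: "q ` {0..r 1} \<noteq> {}" using sB by auto
      show ?thesis unfolding Ti img idx
        using s sB A0 nonconst_sub[of "q ` {0..r 1}" "p ` {t (nA-1)..1} \<union> q ` {0..r 1}"] ne2 by auto
    next
      case F2: False
      define j where "j = i - nA + 1"
      have j: "0 < j" "j < nB" using F2 i by (auto simp: j_def)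
      have Ti: "?T i = 1/2 + r j / 2" "?T (Suc i) = 1/2 + r (Suc j) / 2"
        using F2 by (simp_all add: nA_def j_def Suc_diff_le)
      have s: "r j < r (Suc j)" "q ` {r j..r (Suc j)} \<subseteq> \<phi> (B!j)" "\<not>(\<exists>c. q ` {r j..r (Suc j)} = {c})"
        using segB[of j] j by auto
      have rp: "0 < r j" using rpos[of j] j by simp
      have img: "jp p q ` {1/2 + r j / 2..1/2 + r (Suc j) / 2} = q ` {r j..r (Suc j)}"
        using jp_img2[of "1/2 + r j / 2" "1/2 + r (Suc j) / 2" p q] s rp by simp
      have idx: "(A @ tl B)!i = B!j"
      proof -
        have "(A @ tl B)!i = tl B ! (i - nA)" using F2 by (simp add: nth_append nA_def)
        also have "\<dots> = B ! Suc (i - nA)" using ne by (cases B) simp_all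
        finally show ?thesis by (simp add: j_def)
      qed
      show ?thesis unfolding Ti img idx using s by simp
    qed
  qed
  have seg': "\<forall>i<length (A @ tl B). ?T i < ?T (Suc i) \<and> jp p q ` {?T i..?T (Suc i)} \<subseteq> \<phi> ((A @ tl B)!i) \<and>
       ((False \<longrightarrow> Suc i < length (A @ tl B)) \<longrightarrow> \<not>(\<exists>c. jp p q ` {?T i..?T (Suc i)} = {c}))"
    using seg unfolding len by blast
  show ?thesis unfolding cutsOK_def using T0 T1 seg' by blast
qed


lemma curve_topspace: "curve S C \<Longrightarrow> C \<subseteq> topspace S"
  unfolding curve_def using pathin_topspace by blast

lemma walk_path:
  assumes curves: "\<forall>x\<in>V. curve S (\<phi> x)" and inter: "\<forall>x\<in>V. \<forall>y\<in>V. E x y \<longrightarrow> \<phi> x \<inter> \<phi> y \<noteq> {}"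
  shows "walk V E W \<Longrightarrow> a \<in> \<phi> (hd W) \<Longrightarrow> b \<in> \<phi> (last W) \<Longrightarrow>
         \<exists>q t. pathin S q \<and> q 0 = a \<and> q 1 = b \<and> cutsOK False \<phi> W q t"
proof (induction W arbitrary: a)
  case Nil
  then show ?case by (simp add: walk_def)
next
  case (Cons w W')
  have wV: "w \<in> V" using Cons.prems(1) by (simp add: walk_def)
  show ?case
  proof (cases "W' = []")
    case True
    then have "a \<in> \<phi> w" "b \<in> \<phi> w" using Cons.prems by auto
    moreover have cw: "curve S (\<phi> w)" using curves wV by blast
    ultimately obtain q where q: "pathin S q" "q 0 = a" "q 1 = b" "q ` {0..1} \<subseteq> \<phi> w" "\<not> (\<exists>c. q ` {0..1} = {c})"
      using curve_path[of S "\<phi> w" a b] by metis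
    have "cutsOK False \<phi> [w] q (\<lambda>i. if i = 0 then 0 else 1)"
      unfolding cutsOK_def using q by simp
    then show ?thesis using q True by blast
  next
    case False
    define x where "x = hd W'"
    have W'eq: "W' = x # tl W'" using False by (simp add: x_def)
    have xV: "x \<in> V" and Ewx: "E w x" using Cons.prems(1) False
      by (auto simp: walk_def x_def hd_conv_nth nth_mem)
    have wW': "walk V E W'"
      using Cons.prems(1) False unfolding walk_def by (auto simp: nth_Cons_Suc)
    obtain c where c: "c \<in> \<phi> w" "c \<in> \<phi> x" using inter wV xV Ewx by blast
    have a: "a \<in> \<phi> w" using Cons.prems by simp
    have cw: "curve S (\<phi> w)" using curves wV by blast
    obtain q1 where q1: "pathin S q1" "q1 0 = a" "q1 1 = c" "q1 ` {0..1} \<subseteq> \<phi> w" "\<not> (\<exists>c. q1 ` {0..1} = {c})"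
      using curve_path[OF cw a c(1)] by metis
    have cx: "c \<in> \<phi> (hd W')" using c by (simp add: x_def)
    have bl: "b \<in> \<phi> (last W')" using Cons.prems(3) False by simp
    have "\<exists>q t. pathin S q \<and> q 0 = c \<and> q 1 = b \<and> cutsOK False \<phi> W' q t"
      using Cons.IH[OF wW' cx bl] .
    then obtain q2 r where q2: "pathin S q2" "q2 0 = c" "q2 1 = b" "cutsOK False \<phi> W' q2 r"
      by blast
    define p where "p = jp q1 (\<lambda>_. c)"
    have ctop: "c \<in> topspace S" using curve_topspace curves wV c by blast
    have pp: "pathin S p" unfolding p_def by (rule pathin_jp) (use q1 ctop in auto)
    have p01: "p 0 = a" "p 1 = c" using q1 by (auto simp: p_def jp_def)
    have img0: "p ` {0..1/2} = q1 ` {0..1}" using jp_img1[of 0 "1/2" q1 "\<lambda>_. c"] by (simp add: p_def)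
    have img1: "p ` {1/2..1} = {c}"
    proof -
      have "p ` {1/2..1} = q1 ` {1..1} \<union> (\<lambda>_. c) ` {0..1::real}"
        using jp_img_mid[of "1/2" 1 q1 "\<lambda>_. c"] q1 by (simp add: p_def)
      also have "\<dots> = {c}" using q1 by auto
      finally show ?thesis .
    qed
    have cp: "cutsOK True \<phi> [w, x] p (\<lambda>i. if i = 0 then 0 else if i = 1 then 1/2 else 1)"
      unfolding cutsOK_def
    proof (intro conjI allI impI)
      fix i assume "i < length [w, x]"
      then have "i = 0 \<or> i = 1" by auto
      then show "(if i = 0 then 0 else if i = 1 then 1 / 2 else 1) < (if Suc i = 0 then 0 else if Suc i = 1 then 1 / 2 else (1::real))"
        by auto
      show "p ` {if i = 0 then 0 else if i = 1 then 1 / 2 else 1..if Suc i = 0 then 0 else if Suc i = 1 then 1 / 2 else 1} \<subseteq> \<phi> ([w, x] ! i)"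
        using \<open>i = 0 \<or> i = 1\<close> img0 img1 q1 c by auto
      assume "True \<longrightarrow> Suc i < length [w, x]"
      then have "i = 0" by simp
      then show "\<nexists>ca. p ` {if i = 0 then 0 else if i = 1 then 1 / 2 else 1..if Suc i = 0 then 0 else if Suc i = 1 then 1 / 2 else 1} = {ca}"
        using img0 q1 by simp
    qed simp_all
    have J: "cutsOK False \<phi> ([w, x] @ tl W') (jp p q2)
           (\<lambda>i. if i < length [w, x] then (if i = 0 then 0 else if i = 1 then 1/2 else 1) / 2 else 1/2 + r (i - length [w, x] + 1) / 2)"
      by (rule cuts_join[OF cp q2(4)]) (use False p01 q2 in \<open>auto simp: x_def\<close>)
    have "[w, x] @ tl W' = w # W'" using W'eq by (metis append_Cons append_Nil)
    then have J': "cutsOK False \<phi> (w # W') (jp p q2)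
           (\<lambda>i. if i < length [w, x] then (if i = 0 then 0 else if i = 1 then 1/2 else 1) / 2 else 1/2 + r (i - length [w, x] + 1) / 2)"
      using J by simp
    have "pathin S (jp p q2)" by (rule pathin_jp[OF pp q2(1)]) (simp add: p01 q2)
    moreover have "jp p q2 0 = a" "jp p q2 1 = b" using p01 q2 by (auto simp: jp_def)
    ultimately show ?thesis using J' by blast
  qed
qed


lemma walk_rev:
  assumes sym: "\<And>x y. E x y \<Longrightarrow> E y x" and w: "walk V E W"
  shows "walk V E (rev W)"
  unfolding walk_def
proof (intro conjI allI impI)
  show "rev W \<noteq> []" "set (rev W) \<subseteq> V" using w by (auto simp: walk_def)
  fix i assume i: "Suc i < length (rev W)"
  define n where "n = length W"
  have i': "Suc i < n" using i by (simp add: n_def)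
  have e2: "Suc (n - Suc (Suc i)) = n - Suc i" using i' by simp
  have "Suc (n - Suc (Suc i)) < n" using i' by simp
  then have "E (W ! (n - Suc (Suc i))) (W ! Suc (n - Suc (Suc i)))"
    using w unfolding walk_def n_def by blast
  then have "E (W ! (n - Suc (Suc i))) (W ! (n - Suc i))" unfolding e2 .
  then have "E (W ! (n - Suc i)) (W ! (n - Suc (Suc i)))" using sym by blast
  then show "E (rev W ! i) (rev W ! Suc i)"
    using i' by (simp add: rev_nth n_def)
qed


lemma alpha_cuts:
  assumes c: "cutsOK False \<phi> (W1 @ tl (rev W2)) g t" and ne1: "W1 \<noteq> []" and ne2: "W2 \<noteq> []"
    and k: "k = length W1 - 1" and s: "t k < s" "s < t (Suc k)"
  shows "cutsOK True \<phi> W1 (\<lambda>x. g (s * x)) (\<lambda>i. if i \<le> k then t i / s else 1)"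
proof -
  define W where "W = W1 @ tl (rev W2)"
  have lenW: "length W = length W1 + length W2 - 1" using ne2 unfolding W_def by (cases W2 rule: rev_cases) simp_all
  have "0 < length W1" "0 < length W2" using ne1 ne2 by auto
  then have kW: "k < length W" using lenW k by linarith
  have n1: "length W1 = Suc k" using k ne1 by (cases W1) auto
  have t0: "t 0 = 0" and seg: "\<And>i. i < length W \<Longrightarrow> t i < t (Suc i) \<and> g ` {t i..t (Suc i)} \<subseteq> \<phi> (W!i) \<and>
       \<not>(\<exists>c. g ` {t i..t (Suc i)} = {c})"
    using c unfolding cutsOK_def W_def by auto
  have tk0: "0 \<le> t k" using cuts_range(1)[OF c] kW W_def by simp
  have sp: "0 < s" using tk0 s by simp
  have idx: "W ! i = W1 ! i" if "i < length W1" for i using that by (simp add: W_def nth_append)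
  have A: "(if 0 \<le> k then t 0 / s else 1) = 0" using t0 by simp
  have B: "(if length W1 \<le> k then t (length W1) / s else 1) = 1" using n1 by simp
  have C: "(if i \<le> k then t i / s else 1) < (if Suc i \<le> k then t (Suc i) / s else 1)
      \<and> (\<lambda>x. g (s * x)) ` {if i \<le> k then t i / s else 1..if Suc i \<le> k then t (Suc i) / s else 1} \<subseteq> \<phi> (W1 ! i)
      \<and> ((True \<longrightarrow> Suc i < length W1) \<longrightarrow> \<not> (\<exists>c. (\<lambda>x. g (s * x)) ` {if i \<le> k then t i / s else 1..if Suc i \<le> k then t (Suc i) / s else 1} = {c}))"
    if i: "i < length W1" for i
    proof (cases "Suc i \<le> k")
      case True
      have iW: "i < length W" using True kW by simp
      have si: "t i < t (Suc i)" "g ` {t i..t (Suc i)} \<subseteq> \<phi> (W1!i)" "\<not>(\<exists>c. g ` {t i..t (Suc i)} = {c})"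
        using seg[OF iW] idx[OF i] by auto
      have img: "(\<lambda>x. g (s * x)) ` {t i / s..t (Suc i) / s} = g ` {t i..t (Suc i)}"
        using aff_img[of "t i / s" "t (Suc i) / s" s g 0] si(1) sp by (simp add: divide_right_mono)
      have lt: "t i / s < t (Suc i) / s" using si(1) sp by (simp add: divide_strict_right_mono)
      show ?thesis using True img lt si by simp
    next
      case False
      then have ik: "i = k" using i n1 by simp
      have si: "g ` {t k..t (Suc k)} \<subseteq> \<phi> (W1!k)"
        using seg[OF kW] idx[of k] n1 by auto
      have img: "(\<lambda>x. g (s * x)) ` {t k / s..1} = g ` {t k..s}"
        using aff_img[of "t k / s" 1 s g 0] s sp by (simp add: divide_le_eq_1)
      have "g ` {t k..s} \<subseteq> g ` {t k..t (Suc k)}" using s by (intro image_mono) auto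
      then have sub: "(\<lambda>x. g (s * x)) ` {t k / s..1} \<subseteq> \<phi> (W1!k)" using img si by blast
      have lt: "t k / s < 1" using s sp by simp
      show ?thesis using False ik lt sub n1 by simp
    qed
  show ?thesis unfolding cutsOK_def using A B C by blast
qed


lemma gamma_cuts:
  assumes c: "cutsOK False \<phi> (W1 @ tl (rev W2)) g t" and ne1: "W1 \<noteq> []" and ne2: "W2 \<noteq> []"
    and k: "k = length W1 - 1" and s: "t k < s" "s < t (Suc k)" and lst: "last W1 = last W2"
    and N: "N = length W1 + length W2 - 1"
  shows "cutsOK True \<phi> W2 (\<lambda>x. g (1 - (1 - s) * x)) (\<lambda>j. if j < length W2 then (1 - t (N - j)) / (1 - s) else 1)"
proof -
  define W where "W = W1 @ tl (rev W2)"
  define n2 where "n2 = length W2"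
  define d where "d = 1 - s"
  have n1: "length W1 = Suc k" using k ne1 by (cases W1) auto
  have n2p: "0 < n2" using ne2 by (simp add: n2_def)
  have lenW: "length W = N" using ne2 unfolding W_def N by (cases W2 rule: rev_cases) simp_all
  have NN: "N = k + n2" using n1 n2p N by (simp add: n2_def)
  have kW: "k < length W" using lenW NN n2p by simp
  have t0: "t N = 1" and seg: "\<And>i. i < length W \<Longrightarrow> t i < t (Suc i) \<and> g ` {t i..t (Suc i)} \<subseteq> \<phi> (W!i) \<and>
       \<not>(\<exists>c. g ` {t i..t (Suc i)} = {c})"
    using c lenW unfolding cutsOK_def W_def by auto
  have tk1: "t (Suc k) \<le> 1" using cuts_range(2)[OF c, of "Suc k"] kW lenW W_def by simp
  have dp: "0 < d" using s tk1 by (simp add: d_def)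
  have geq: "(\<lambda>x. g (1 - (1 - s) * x)) = (\<lambda>x. g ((-d) * x + 1))" by (simp add: d_def algebra_simps)
  have A: "(if 0 < n2 then (1 - t (N - 0)) / d else 1) = 0" using t0 n2p by simp
  have B: "(if n2 < n2 then (1 - t (N - n2)) / d else 1) = 1" by simp
  have C: "(if j < n2 then (1 - t (N - j)) / d else 1) < (if Suc j < n2 then (1 - t (N - Suc j)) / d else 1)
      \<and> (\<lambda>x. g ((-d) * x + 1)) ` {if j < n2 then (1 - t (N - j)) / d else 1..if Suc j < n2 then (1 - t (N - Suc j)) / d else 1} \<subseteq> \<phi> (W2 ! j)
      \<and> ((True \<longrightarrow> Suc j < n2) \<longrightarrow> \<not> (\<exists>c. (\<lambda>x. g ((-d) * x + 1)) ` {if j < n2 then (1 - t (N - j)) / d else 1..if Suc j < n2 then (1 - t (N - Suc j)) / d else 1} = {c}))"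
    if j: "j < n2" for j
  proof (cases "Suc j < n2")
    case True
    define m where "m = N - Suc j"
    have mW: "m < length W" "Suc k \<le> m" using True lenW NN by (auto simp: m_def)
    have Nj: "N - j = Suc m" using True NN by (simp add: m_def)
    have sm: "t m < t (Suc m)" "g ` {t m..t (Suc m)} \<subseteq> \<phi> (W!m)" "\<not>(\<exists>c. g ` {t m..t (Suc m)} = {c})"
      using seg[OF mW(1)] by auto
    have idx: "W ! m = W2 ! j"
    proof -
      have "W ! m = tl (rev W2) ! (m - Suc k)" using mW n1 by (simp add: W_def nth_append)
      also have "\<dots> = rev W2 ! Suc (m - Suc k)" using ne2 by (cases W2 rule: rev_cases) simp_all
      also have "\<dots> = W2 ! (n2 - Suc (Suc (m - Suc k)))"
        using True NN mW by (subst rev_nth) (auto simp: n2_def m_def)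
      also have "n2 - Suc (Suc (m - Suc k)) = j" using True NN by (simp add: m_def)
      finally show ?thesis .
    qed
    have lt: "(1 - t (Suc m)) / d < (1 - t m) / d" using sm(1) dp by (simp add: divide_strict_right_mono)
    have img: "(\<lambda>x. g ((-d) * x + 1)) ` {(1 - t (Suc m)) / d..(1 - t m) / d} = g ` {t m..t (Suc m)}"
      using aff_img_neg[of "(1 - t (Suc m)) / d" "(1 - t m) / d" "-d" g 1] lt dp by simp
    show ?thesis using True j lt img sm idx Nj by (simp add: m_def)
  next
    case False
    then have jn: "j = n2 - 1" using j by simp
    have Nj: "N - j = Suc k" using jn NN n2p by simp
    have sk: "g ` {t k..t (Suc k)} \<subseteq> \<phi> (W!k)" using seg[OF kW] by auto
    have idx: "W ! k = W2 ! j"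
    proof -
      have "W ! k = W1 ! k" using n1 by (simp add: W_def nth_append)
      also have "\<dots> = last W1" using n1 ne1 by (simp add: last_conv_nth)
      also have "\<dots> = last W2" by (rule lst)
      also have "\<dots> = W2 ! j" using ne2 jn by (simp add: last_conv_nth n2_def)
      finally show ?thesis .
    qed
    have lt: "(1 - t (Suc k)) / d < 1" using s dp by (simp add: d_def)
    have img: "(\<lambda>x. g ((-d) * x + 1)) ` {(1 - t (Suc k)) / d..1} = g ` {s..t (Suc k)}"
    proof -
      have e1: "(-d) * ((1 - t (Suc k)) / d) + 1 = t (Suc k)" using dp by (simp add: field_simps)
      have e2: "(-d) * 1 + 1 = s" by (simp add: d_def)
      show ?thesis using aff_img_neg[of "(1 - t (Suc k)) / d" 1 "-d" g 1] lt dp unfolding e1 e2 by simp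
    qed
    have "g ` {s..t (Suc k)} \<subseteq> g ` {t k..t (Suc k)}" using s by (intro image_mono) auto
    then have sub: "(\<lambda>x. g ((-d) * x + 1)) ` {(1 - t (Suc k)) / d..1} \<subseteq> \<phi> (W2!j)" using img sk idx by simp
    show ?thesis using False j lt sub Nj by simp
  qed
  have R: "cutsOK True \<phi> W2 (\<lambda>x. g ((-d) * x + 1)) (\<lambda>j. if j < n2 then (1 - t (N - j)) / d else 1)"
    unfolding cutsOK_def n2_def[symmetric] using A B C by blast
  show ?thesis unfolding geq using R unfolding d_def n2_def .
qed


theorem lemma15:
  fixes S :: "'a topology" and V :: "'v set" and E :: "'v \<Rightarrow> 'v \<Rightarrow> bool"
    and \<phi> :: "'v \<Rightarrow> 'a set" and u v :: 'v and W1 W2 W3 :: "'v list"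
  assumes "surface S" and "simple_graph V E" and "string_rep S V E \<phi>"
    and "u \<in> V" and "v \<in> V"
    and "walk V E W1" and "hd W1 = u" and "last W1 = v"
    and "walk V E W2" and "hd W2 = u" and "last W2 = v"
    and "walk V E W3" and "hd W3 = u" and "last W3 = v"
    and "imitates_noncontractible S \<phi> (walk_minus W1 W2)"
  shows "imitates_noncontractible S \<phi> (walk_minus W1 W3) \<or>
         imitates_noncontractible S \<phi> (walk_minus W2 W3)"
proof -
  have SR: "\<forall>x\<in>V. curve S (\<phi> x)" and SR2: "\<forall>x\<in>V. \<forall>y\<in>V. x \<noteq> y \<longrightarrow> (E x y \<longleftrightarrow> \<phi> x \<inter> \<phi> y \<noteq> {})"
    using assms(3) unfolding string_rep_def by auto
  have SG: "\<And>x y. E x y \<Longrightarrow> x \<in> V \<and> y \<in> V \<and> x \<noteq> y \<and> E y x"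
    using assms(2) unfolding simple_graph_def by blast
  have inter: "\<forall>x\<in>V. \<forall>y\<in>V. E x y \<longrightarrow> \<phi> x \<inter> \<phi> y \<noteq> {}" using SR2 SG by blast
  obtain e :: "'a \<Rightarrow> ('a \<Rightarrow> real) \<Rightarrow> real" where emb: "embedding_map S euclidean e"
    using surface_embedding[OF assms(1)] by blast
  obtain g where gi: "imitates S \<phi> (walk_minus W1 W2) g" "g 0 = g 1" "\<not> contractible_loop S g"
    using assms(15) unfolding imitates_noncontractible_def by blast
  define W where "W = W1 @ tl (rev W2)"
  have Weq: "walk_minus W1 W2 = W" by (simp add: walk_minus_def walk_plus_def W_def)
  have pg: "pathin S g" using gi(1) by (simp add: imitates_def)
  obtain t where ct: "cutsOK False \<phi> W g t" using gi(1) unfolding Weq imitates_cuts by blast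
  have ne1: "W1 \<noteq> []" and ne2: "W2 \<noteq> []" and ne3: "W3 \<noteq> []"
    using assms(6,9,12) by (auto simp: walk_def)
  define k where "k = length W1 - 1"
  define N where "N = length W1 + length W2 - 1"
  have n1: "length W1 = Suc k" using ne1 by (simp add: k_def)
  have lenW: "length W = N" using ne2 unfolding W_def N_def by (cases W2 rule: rev_cases) simp_all
  have kN: "k < N" using n1 ne2 by (simp add: N_def)
  have segk: "t k < t (Suc k)" "g ` {t k..t (Suc k)} \<subseteq> \<phi> (W!k)"
    using ct kN lenW unfolding cutsOK_def by auto
  have allseg: "\<forall>i<length W. t i < t (Suc i) \<and> g ` {t i..t (Suc i)} \<subseteq> \<phi> (W!i)" and t00: "t 0 = 0"
    using ct unfolding cutsOK_def by auto
  have W0pos: "0 < length W" using kN lenW by simp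
  have seg0: "g ` {t 0..t (Suc 0)} \<subseteq> \<phi> (W!0)" "t 0 = 0" "t 0 < t (Suc 0)"
  proof -
    have "t 0 < t (Suc 0) \<and> g ` {t 0..t (Suc 0)} \<subseteq> \<phi> (W!0)" using allseg W0pos by blast
    then show "g ` {t 0..t (Suc 0)} \<subseteq> \<phi> (W!0)" "t 0 = 0" "t 0 < t (Suc 0)" using t00 by auto
  qed
  have tk0: "0 \<le> t k" using cuts_range(1)[OF ct] kN lenW by simp
  have tk1: "t (Suc k) \<le> 1" using cuts_range(2)[OF ct, of "Suc k"] kN lenW by simp
  define s where "s = (t k + t (Suc k)) / 2"
  have s: "t k < s" "s < t (Suc k)" using segk by (auto simp: s_def)
  have s01: "0 < s" "s < 1" using s tk0 tk1 by auto
  define \<alpha> where "\<alpha> = (\<lambda>x. g (s * x))"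
  define \<gamma> where "\<gamma> = (\<lambda>x. g (1 - (1 - s) * x))"
  have pa: "pathin S \<alpha>" unfolding \<alpha>_def
  proof (rule pathin_reparam[OF pg])
    show "continuous_on {0..1} ((*) s)" by (intro continuous_intros)
    show "(*) s ` {0..1} \<subseteq> {0..1}"
    proof
      fix y assume "y \<in> (*) s ` {0..1::real}"
      then obtain x where x: "x \<in> {0..1}" "y = s * x" by blast
      have h1: "s * x \<le> s" using x s01 by simp
      have h2: "0 \<le> s * x" using x s01 by simp
      have "0 \<le> y" "y \<le> 1" using h1 h2 x(2) s01 by linarith+
      then show "y \<in> {0..1}" by simp
    qed
  qed
  have pgm: "pathin S \<gamma>" unfolding \<gamma>_def
  proof (rule pathin_reparam[OF pg])
    show "continuous_on {0..1} (\<lambda>x. 1 - (1 - s) * x)" by (intro continuous_intros)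
    show "(\<lambda>x. 1 - (1 - s) * x) ` {0..1} \<subseteq> {0..1}"
    proof
      fix y assume "y \<in> (\<lambda>x. 1 - (1 - s) * x) ` {0..1::real}"
      then obtain x where x: "x \<in> {0..1}" "y = 1 - (1 - s) * x" by blast
      have h1: "(1 - s) * x \<le> 1 - s" using x s01 by simp
      have h2: "0 \<le> (1 - s) * x" using x s01 by simp
      have "0 \<le> y" "y \<le> 1" using h1 h2 x(2) s01 by linarith+
      then show "y \<in> {0..1}" by simp
    qed
  qed
  have ca: "cutsOK True \<phi> W1 \<alpha> (\<lambda>i. if i \<le> k then t i / s else 1)"
    unfolding \<alpha>_def by (rule alpha_cuts[OF ct[unfolded W_def] ne1 ne2 _ s]) (simp add: k_def)
  have cg: "cutsOK True \<phi> W2 \<gamma> (\<lambda>j. if j < length W2 then (1 - t (N - j)) / (1 - s) else 1)"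
    unfolding \<gamma>_def by (rule gamma_cuts[OF ct[unfolded W_def] ne1 ne2 _ s]) (simp_all add: k_def N_def assms(8,11))
  define a where "a = g 0"
  define b where "b = g s"
  have Wk: "W ! k = v" using n1 ne1 assms(8) by (simp add: W_def nth_append last_conv_nth)
  have W0: "W ! 0 = u" using ne1 assms(7) by (simp add: W_def nth_append hd_conv_nth)
  have aU: "a \<in> \<phi> u"
  proof -
    have "(0::real) \<in> {t 0..t (Suc 0)}" using seg0 by simp
    then have "g 0 \<in> g ` {t 0..t (Suc 0)}" by (rule imageI)
    then show ?thesis using seg0 W0 by (auto simp: a_def)
  qed
  have bV: "b \<in> \<phi> v"
  proof -
    have "g s \<in> g ` {t k..t (Suc k)}" using s by auto
    then show ?thesis using segk Wk by (auto simp: b_def)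
  qed
  have wr3: "walk V E (rev W3)" by (rule walk_rev[OF _ assms(12)]) (use SG in blast)
  have hr3: "hd (rev W3) = v" "last (rev W3) = u" using ne3 assms(13,14) by (simp_all add: hd_rev last_rev)
  obtain \<delta> r where d: "pathin S \<delta>" "\<delta> 0 = b" "\<delta> 1 = a" "cutsOK False \<phi> (rev W3) \<delta> r"
    using walk_path[OF SR inter wr3, of b a] bV aU hr3 by auto
  have ne3r: "rev W3 \<noteq> []" using ne3 by simp
  have a1: "\<alpha> 1 = b" "\<gamma> 1 = b" "\<alpha> 0 = g 0" "\<gamma> 0 = g 0" using gi(2) by (simp_all add: \<alpha>_def \<gamma>_def b_def)
  define L1 where "L1 = jp \<alpha> \<delta>"
  define L2 where "L2 = jp \<gamma> \<delta>"
  have I1: "imitates S \<phi> (walk_minus W1 W3) L1"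
    unfolding imitates_cuts walk_minus_def walk_plus_def L1_def
  proof
    show "pathin S (jp \<alpha> \<delta>)" using pathin_jp[OF pa d(1)] a1 d by simp
    show "\<exists>t. cutsOK False \<phi> (W1 @ tl (rev W3)) (jp \<alpha> \<delta>) t"
      using cuts_join[OF ca d(4) ne1 ne3r] assms(8) hr3 a1 d by auto
  qed
  have I2: "imitates S \<phi> (walk_minus W2 W3) L2"
    unfolding imitates_cuts walk_minus_def walk_plus_def L2_def
  proof
    show "pathin S (jp \<gamma> \<delta>)" using pathin_jp[OF pgm d(1)] a1 d by simp
    show "\<exists>t. cutsOK False \<phi> (W2 @ tl (rev W3)) (jp \<gamma> \<delta>) t"
      using cuts_join[OF cg d(4) ne2 ne3r] assms(11) hr3 a1 d by auto
  qed
  have L1e: "L1 0 = g 0" "L1 1 = g 0" using a1 d by (simp_all add: L1_def jp_def a_def)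
  have L2e: "L2 0 = g 0" "L2 1 = g 0" using a1 d by (simp_all add: L2_def jp_def a_def)
  show ?thesis
  proof (rule ccontr)
    assume neg: "\<not> (imitates_noncontractible S \<phi> (walk_minus W1 W3) \<or>
         imitates_noncontractible S \<phi> (walk_minus W2 W3))"
    have C1: "contractible_loop S (jp \<alpha> \<delta>)"
      using neg I1 L1e unfolding imitates_noncontractible_def L1_def by auto
    have C2: "contractible_loop S (jp \<gamma> \<delta>)"
      using neg I2 L2e unfolding imitates_noncontractible_def L2_def by auto
    define f where "f = (\<lambda>x::real. if x \<le> 1/2 then 2 * s * x else 1 - (1 - s) * (2 - 2 * x))"
    have agree: "\<forall>x. x \<in> {0..1 / 2} \<and> \<not> x \<le> 1 / 2 \<or> x \<in> {1 / 2..1} \<and> x \<le> 1 / 2 \<longrightarrow>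
         2 * s * x = 1 - (1 - s) * (2 - 2 * x)"
    proof (intro allI impI)
      fix x :: real assume "x \<in> {0..1 / 2} \<and> \<not> x \<le> 1 / 2 \<or> x \<in> {1 / 2..1} \<and> x \<le> 1 / 2"
      then have x: "x = 1/2" by auto
      show "2 * s * x = 1 - (1 - s) * (2 - 2 * x)" unfolding x by simp
    qed
    have fc: "continuous_on {0..1} f"
      unfolding f_def split_01
      by (rule continuous_on_cases continuous_intros agree | force)+
    have fr: "f \<in> {0..1} \<rightarrow> {0..1}"
    proof
      fix x :: real assume x: "x \<in> {0..1}"
      show "f x \<in> {0..1}"
      proof (cases "x \<le> 1/2")
        case True
        have h1: "s * (2 * x) \<le> s" using x True s01 by simp
        have h2: "0 \<le> s * (2 * x)" using x s01 by simp
        have e: "f x = s * (2 * x)" using True by (simp add: f_def)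
        have "0 \<le> f x" "f x \<le> 1" unfolding e using h1 h2 s01 by linarith+
        then show ?thesis by simp
      next
        case False
        have h1: "(1 - s) * (2 - 2 * x) \<le> 1 - s" using x False s01 by simp
        have h2: "0 \<le> (1 - s) * (2 - 2 * x)" using x s01 by simp
        have e: "f x = 1 - (1 - s) * (2 - 2 * x)" using False by (simp add: f_def)
        have "0 \<le> f x" "f x \<le> 1" unfolding e using h1 h2 s01 by linarith+
        then show ?thesis by simp
      qed
    qed
    have f01: "f 0 = 0" "f 1 = 1" by (simp_all add: f_def)
    have gf: "jp \<alpha> (rv \<gamma>) x = g (f x)" if "x \<in> {0..1}" for x
    proof (cases "x \<le> 1/2")
      case True then show ?thesis by (simp add: jp_def rv_def \<alpha>_def f_def mult.commute mult.left_commute)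
    next
      case False
      have "1 - (2 * x - 1) = 2 - 2 * x" by simp
      then show ?thesis using False by (simp add: jp_def rv_def \<gamma>_def f_def)
    qed
    have "contractible_loop S g"
      by (rule abstract_core[OF emb pa pgm d(1) pg _ _ _ _ _ _ C1 C2 fc fr f01 gf])
         (use a1 d gi(2) in \<open>simp_all add: a_def b_def\<close>)
    then show False using gi(3) by simp
  qed
qed


end
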